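(* Let $\Lambda$ be a lattice and let $\bar a=(a_1,\ldots,a_t)\in(\mathcal F^0(\Lambda,\bar K))^t$. For any two sublattices $\Lambda_1,\Lambda_2\subseteq\Lambda$ of finite index, $$\mathrm{CharPoly}_{\bar a,\Lambda_1+\Lambda_2}\ \Big|\ \gcd\big(\mathrm{CharPoly}_{\bar a,\Lambda_1},\,\mathrm{CharPoly}_{\bar a,\Lambda_2}\big)$$ and $$\mathrm{lcm}\big(\mathrm{CharPoly}_{\bar a,\Lambda_1},\,\mathrm{CharPoly}_{\bar a,\Lambda_2}\big)\ \Big|\ \mathrm{CharPoly}_{\bar a,\Lambda_1\cap\Lambda_2}.$$ Consequently, $\mathrm{CharPoly}_{\bar a,\Lambda_2}$ divides $\mathrm{CharPoly}_{\bar a,\Lambda_1}$ whenever $\Lambda_1\subseteq\Lambda_2$.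
   Context: Let $p$ be a prime, $K=\mathrm{GF}(p^r)$, and $\bar K$ an algebraic closure of $K$. A lattice is a free abelian group of finite rank. For an abelian group $G$ and a field $F$, $\mathcal F(G,F)$ denotes the space of all functions $G\to F$ and $\mathcal F^0(G,F)$ the subspace of finitely supported functions. For $f\in\mathcal F(G,F)$ and $a\in\mathcal F^0(G,F)$ the convolution is $(f*a)(g)=\sum_{h\in G}f(h)a(g-h)$, and $\Delta_a$ is the operator $f\mapsto f*a$. For a sublattice $\Lambda'\subseteq\Lambda$ of finite index, $\mathcal F_{\Lambda'}(\Lambda,\bar K)=\{f:\Lambda\to\bar K\,:\,f(v+w)=f(v)\ \forall v\in\Lambda,w\in\Lambda'\}$; it is finite dimensional and preserved by every $\Delta_a$. For $\bar a=(a_1,\ldots,a_t)$, $\mathrm{CharPoly}_{\bar a,\Lambda'}\in\bar K[x]$ is the monic greatest common divisor of the (monic) characteristic polynomials of the restrictions $\Delta_{a_j}|_{\mathcal F_{\Lambda'}(\Lambda,\bar K)}$, $j=1,\ldots,t$. *)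

theory Defs
  imports "Jordan_Normal_Form.Char_Poly" "HOL-Library.Function_Algebras"
    "HOL-Computational_Algebra.Polynomial_Factorial"
begin

text \<open>The field Kbar: an algebraic closure of GF(p^r) (equivalently of GF(p)).\<close>
definition is_alg_closure_of_GFp :: "nat \<Rightarrow> 'k::field itself \<Rightarrow> bool" where
  "is_alg_closure_of_GFp p _ \<longleftrightarrow>
     CHAR('k) = p \<and>
     (\<forall>q::'k poly. degree q \<ge> 1 \<longrightarrow> (\<exists>x. poly q x = 0)) \<and>
     (\<forall>x::'k. \<exists>q::'k poly. q \<noteq> 0 \<and> (\<forall>i. coeff q i \<in> range of_nat) \<and> poly q x = 0)"

text \<open>Lattices: the ambient lattice is Z^n, modelled as 'n => int with 'n finite.
  A sublattice of finite index is a subgroup with finitely many cosets.\<close>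
definition is_subgroup :: "'g::ab_group_add set \<Rightarrow> bool" where
  "is_subgroup L \<longleftrightarrow> 0 \<in> L \<and> (\<forall>x\<in>L. \<forall>y\<in>L. x + y \<in> L) \<and> (\<forall>x\<in>L. - x \<in> L)"

definition finite_index_sublattice :: "'g::ab_group_add set \<Rightarrow> bool" where
  "finite_index_sublattice L \<longleftrightarrow> is_subgroup L \<and> finite ((\<lambda>v. (\<lambda>w. v + w) ` L) ` UNIV)"

definition set_plus_grp :: "'g::ab_group_add set \<Rightarrow> 'g set \<Rightarrow> 'g set" where
  "set_plus_grp A B = {x + y | x y. x \<in> A \<and> y \<in> B}"

definition fin_supp :: "('g \<Rightarrow> 'k::zero) \<Rightarrow> bool" where
  "fin_supp a \<longleftrightarrow> finite {g. a g \<noteq> 0}"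

definition conv :: "('g::ab_group_add \<Rightarrow> 'k::comm_ring_1) \<Rightarrow> ('g \<Rightarrow> 'k) \<Rightarrow> 'g \<Rightarrow> 'k" where
  "conv f a g = (\<Sum>h | a (g - h) \<noteq> 0. f h * a (g - h))"

definition Delta :: "('g::ab_group_add \<Rightarrow> 'k::comm_ring_1) \<Rightarrow> ('g \<Rightarrow> 'k) \<Rightarrow> ('g \<Rightarrow> 'k)" where
  "Delta a f = conv f a"

definition periodic_space :: "'g::ab_group_add set \<Rightarrow> ('g \<Rightarrow> 'k) set" where
  "periodic_space L = {f. \<forall>v w. w \<in> L \<longrightarrow> f (v + w) = f v}"

definition scal :: "'k::comm_ring_1 \<Rightarrow> ('g \<Rightarrow> 'k) \<Rightarrow> ('g \<Rightarrow> 'k)" where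
  "scal c f = (\<lambda>x. c * f x)"

definition is_basis_list :: "('g \<Rightarrow> 'k::field) set \<Rightarrow> ('g \<Rightarrow> 'k) list \<Rightarrow> bool" where
  "is_basis_list V bs \<longleftrightarrow> set bs \<subseteq> V \<and> distinct bs \<and>
     \<not> module.dependent scal (set bs) \<and> module.span scal (set bs) = V"

definition coords :: "('g \<Rightarrow> 'k::field) list \<Rightarrow> ('g \<Rightarrow> 'k) \<Rightarrow> 'k list" where
  "coords bs v = (THE cs. length cs = length bs \<and>
       v = (\<Sum>i<length bs. scal (cs ! i) (bs ! i)))"

definition matrix_wrt :: "('g \<Rightarrow> 'k::field) list \<Rightarrow> (('g \<Rightarrow> 'k) \<Rightarrow> ('g \<Rightarrow> 'k)) \<Rightarrow> 'k mat" where
  "matrix_wrt bs T = mat (length bs) (length bs) (\<lambda>(i, j). coords bs (T (bs ! j)) ! i)"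

text \<open>Characteristic polynomial of the restriction of T to the finite-dimensional
  subspace V (computed in an arbitrary basis of V; it is basis independent).\<close>
definition charpoly_on :: "('g \<Rightarrow> 'k::field) set \<Rightarrow> (('g \<Rightarrow> 'k) \<Rightarrow> ('g \<Rightarrow> 'k)) \<Rightarrow> 'k poly" where
  "charpoly_on V T = char_poly (matrix_wrt (SOME bs. is_basis_list V bs) T)"

definition CharPoly :: "('g::ab_group_add \<Rightarrow> 'k::field_gcd) list \<Rightarrow> 'g set \<Rightarrow> 'k poly" where
  "CharPoly as L = Gcd ((\<lambda>a. charpoly_on (periodic_space L) (Delta a)) ` set as)"

end

theory Submission
  imports Defs
begin

interpretation fs: vector_space "scal :: 'k::field \<Rightarrow> ('g \<Rightarrow> 'k) \<Rightarrow> ('g \<Rightarrow> 'k)"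
  by unfold_locales (auto simp: scal_def fun_eq_iff algebra_simps)

definition lcf :: "(nat \<Rightarrow> 'k::field) \<Rightarrow> ('g \<Rightarrow> 'k) list \<Rightarrow> ('g \<Rightarrow> 'k)" where
  "lcf c bs = (\<Sum>i<length bs. scal (c i) (bs ! i))"

definition lin :: "(('g \<Rightarrow> 'k::field) \<Rightarrow> ('g \<Rightarrow> 'k)) \<Rightarrow> bool" where
  "lin T \<longleftrightarrow> (\<forall>x y. T (x + y) = T x + T y) \<and> (\<forall>c x. T (scal c x) = scal c (T x))"

lemma sum_fun_app: "(sum f A) x = (\<Sum>i\<in>A. f i x)"
  by (induct A rule: infinite_finite_induct) auto

lemma lcf_apply: "lcf c bs x = (\<Sum>i<length bs. c i * (bs ! i) x)"
  by (simp add: lcf_def scal_def sum_fun_app)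

lemma lcf_cong: "(\<And>i. i < length bs \<Longrightarrow> c i = d i) \<Longrightarrow> lcf c bs = lcf d bs"
  unfolding lcf_def by (rule sum.cong) auto

lemma sum_set_distinct:
  assumes "distinct bs" shows "(\<Sum>v\<in>set bs. g v) = (\<Sum>i<length bs. g (bs ! i))"
proof -
  have "set bs = (!) bs ` {..<length bs}" by (auto simp: set_conv_nth)
  moreover have "inj_on ((!) bs) {..<length bs}" using assms by (auto intro: inj_on_nth)
  ultimately show ?thesis by (simp add: sum.reindex)
qed

lemma lcf_unique:
  assumes "is_basis_list V bs" "lcf c bs = lcf d bs" "i < length bs"
  shows "c i = d i"
proof -
  let ?n = "length bs"
  let ?f = "the_inv_into {..<?n} ((!) bs)"
  have inj: "inj_on ((!) bs) {..<?n}" using assms(1) by (auto simp: is_basis_list_def intro: inj_on_nth)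
  have fi: "?f (bs ! j) = j" if "j < ?n" for j using the_inv_into_f_f[OF inj] that by auto
  define u where "u v = c (?f v) - d (?f v)" for v
  have "(\<Sum>v\<in>set bs. scal (u v) v) = (\<Sum>j<?n. scal (u (bs ! j)) (bs ! j))"
    using assms(1) by (simp add: is_basis_list_def sum_set_distinct)
  also have "\<dots> = (\<Sum>j<?n. scal (c j - d j) (bs ! j))" by (rule sum.cong) (auto simp: u_def fi)
  also have "\<dots> = lcf c bs - lcf d bs"
    by (simp add: lcf_apply scal_def fun_eq_iff sum_fun_app sum_subtractf left_diff_distrib)
  also have "\<dots> = 0" using assms(2) by simp
  finally have z: "(\<Sum>v\<in>set bs. scal (u v) v) = 0" .
  have nd: "\<not> module.dependent scal (set bs)" using assms(1) by (simp add: is_basis_list_def)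
  have "u (bs ! i) = 0"
  proof (rule ccontr)
    assume "u (bs ! i) \<noteq> 0"
    hence "module.dependent scal (set bs)"
      unfolding fs.dependent_explicit using z assms(3)
      by (intro exI[of _ "set bs"] exI[of _ u]) auto
    thus False using nd by simp
  qed
  thus ?thesis using fi[OF assms(3)] by (simp add: u_def)
qed

lemma lcf_exists:
  assumes "is_basis_list V bs" "v \<in> V"
  shows "\<exists>c. v = lcf c bs"
proof -
  have "v \<in> fs.span (set bs)" using assms by (simp add: is_basis_list_def)
  then obtain u where u: "v = (\<Sum>x\<in>set bs. scal (u x) x)" by (auto simp: fs.span_finite)
  have "v = lcf (\<lambda>i. u (bs ! i)) bs"
    using assms(1) u by (simp add: is_basis_list_def sum_set_distinct lcf_def)
  thus ?thesis by blast
qed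

lemma coords_lcf:
  assumes "is_basis_list V bs" "v = lcf c bs" "i < length bs"
  shows "coords bs v ! i = c i"
proof -
  let ?cs = "map c [0..<length bs]"
  have eq: "(\<Sum>i<length bs. scal (cs ! i) (bs ! i)) = lcf (\<lambda>i. cs ! i) bs" for cs
    by (simp add: lcf_def)
  have "coords bs v = ?cs"
    unfolding coords_def eq
  proof (rule the_equality)
    show "length ?cs = length bs \<and> v = lcf ((!) ?cs) bs"
      using assms(2) by (auto intro: lcf_cong)
  next
    fix cs assume h: "length cs = length bs \<and> v = lcf ((!) cs) bs"
    show "cs = ?cs"
    proof (rule nth_equalityI)
      show "length cs = length ?cs" using h by simp
      fix j assume "j < length cs"
      thus "cs ! j = ?cs ! j" using lcf_unique[OF assms(1), of "(!) cs" c j] h assms(2) by simp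
    qed
  qed
  thus ?thesis using assms(3) by simp
qed

lemma lcf_rep:
  assumes "is_basis_list V bs" "v \<in> V"
  shows "v = lcf (\<lambda>i. coords bs v ! i) bs"
proof -
  obtain c where c: "v = lcf c bs" using lcf_exists[OF assms] by blast
  show ?thesis using coords_lcf[OF assms(1) c] c by (auto intro: lcf_cong)
qed

lemma lin_sum: assumes "lin T" shows "T (\<Sum>i\<in>A. f i) = (\<Sum>i\<in>A. T (f i))"
proof -
  have "T 0 = T 0 + T 0" using assms unfolding lin_def by (metis add_0)
  hence T0: "T 0 = 0" by simp
  show ?thesis
  proof (induct A rule: infinite_finite_induct)
    case (insert x F)
    have add: "\<And>x y. T (x + y) = T x + T y" using assms lin_def by blast
    show ?case by (simp only: sum.insert[OF insert(1,2)] add insert(3))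
  next
    case (infinite A) show ?case by (simp only: sum.infinite[OF infinite] T0)
  next
    case empty show ?case using T0 by (simp only: sum.empty)
  qed
qed

lemma lin_lcf: "lin T \<Longrightarrow> T (lcf c bs) = lcf c (map T bs)"
  unfolding lcf_def by (simp add: lin_sum) (simp add: lin_def)

lemma lcf_subst:
  assumes "\<forall>k<length cs. cs ! k = lcf (\<lambda>i. P i k) bs"
  shows "lcf c cs = lcf (\<lambda>i. \<Sum>k<length cs. P i k * c k) bs"
proof (rule ext)
  fix x
  have "lcf c cs x = (\<Sum>k<length cs. c k * (\<Sum>i<length bs. P i k * (bs ! i) x))"
    unfolding lcf_apply using assms by (intro sum.cong) (auto simp: lcf_apply)
  also have "\<dots> = (\<Sum>i<length bs. (\<Sum>k<length cs. P i k * c k) * (bs ! i) x)"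
  proof -
    have "(\<Sum>k<length cs. c k * (\<Sum>i<length bs. P i k * (bs ! i) x))
        = (\<Sum>k<length cs. \<Sum>i<length bs. P i k * c k * (bs ! i) x)"
      by (simp add: sum_distrib_left mult_ac)
    also have "\<dots> = (\<Sum>i<length bs. \<Sum>k<length cs. P i k * c k * (bs ! i) x)"
      by (rule sum.swap)
    also have "\<dots> = (\<Sum>i<length bs. (\<Sum>k<length cs. P i k * c k) * (bs ! i) x)"
      by (simp add: sum_distrib_right)
    finally show ?thesis .
  qed
  also have "\<dots> = lcf (\<lambda>i. \<Sum>k<length cs. P i k * c k) bs x" by (simp add: lcf_apply)
  finally show "lcf c cs x = lcf (\<lambda>i. \<Sum>k<length cs. P i k * c k) bs x" .
qed

lemma lcf_in: assumes "is_basis_list V bs" shows "lcf c bs \<in> V"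
proof -
  have "lcf c bs \<in> fs.span (set bs)" unfolding lcf_def
    by (intro fs.span_sum fs.span_scale fs.span_base) simp
  thus ?thesis using assms by (simp add: is_basis_list_def)
qed

lemma mult_entry:
  assumes "A \<in> carrier_mat n m" "B \<in> carrier_mat m l" "i < n" "j < l"
  shows "(A * B) $$ (i,j) = (\<Sum>k<m. A $$ (i,k) * B $$ (k,j))"
  using assms by (simp add: scalar_prod_def atLeast0LessThan)

lemma lcf_delta: "j < length bs \<Longrightarrow> lcf (\<lambda>i. if i = j then 1 else 0) bs = bs ! j"
proof -
  assume j: "j < length bs"
  have "lcf (\<lambda>i. if i = j then 1 else 0) bs = (\<Sum>i<length bs. if i = j then bs ! i else 0)"
    unfolding lcf_def by (rule sum.cong) (auto simp: scal_def fun_eq_iff)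
  also have "\<dots> = bs ! j" using j by (simp add: sum.delta)
  finally show ?thesis .
qed

lemma basis_len:
  assumes "is_basis_list V bs" "is_basis_list V cs"
  shows "length bs = length cs"
proof -
  have "fs.dim V = card (set bs)" using assms(1) unfolding is_basis_list_def
    by (intro fs.dim_unique) auto
  moreover have "fs.dim V = card (set cs)" using assms(2) unfolding is_basis_list_def
    by (intro fs.dim_unique) auto
  ultimately show ?thesis using assms by (simp add: is_basis_list_def distinct_card)
qed

definition cb :: "('g \<Rightarrow> 'k::field) list \<Rightarrow> ('g \<Rightarrow> 'k) list \<Rightarrow> 'k mat" where
  "cb bs cs = mat (length bs) (length cs) (\<lambda>(i,j). coords bs (cs ! j) ! i)"

lemma cb_rep:
  assumes "is_basis_list V bs" "set cs \<subseteq> V" "k < length cs"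
  shows "cs ! k = lcf (\<lambda>i. cb bs cs $$ (i,k)) bs"
proof -
  have "cs ! k \<in> V" using assms(2,3) by auto
  from lcf_rep[OF assms(1) this] have "cs ! k = lcf (\<lambda>i. coords bs (cs ! k) ! i) bs" .
  also have "\<dots> = lcf (\<lambda>i. cb bs cs $$ (i,k)) bs"
    by (rule lcf_cong) (use assms(3) in \<open>simp add: cb_def\<close>)
  finally show ?thesis .
qed

lemma cb_mult:
  assumes bs: "is_basis_list V bs" and cs: "is_basis_list V cs"
  shows "cb bs cs * cb cs bs = 1\<^sub>m (length bs)"
proof -
  let ?n = "length bs"
  have len: "length cs = ?n" using basis_len[OF cs bs] .
  let ?P = "cb bs cs" and ?Q = "cb cs bs"
  have P: "?P \<in> carrier_mat ?n ?n" and Q: "?Q \<in> carrier_mat ?n ?n"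
    using len by (auto simp: cb_def)
  show ?thesis
  proof (rule eq_matI)
    fix i j assume i: "i < dim_row (1\<^sub>m ?n)" and j: "j < dim_col (1\<^sub>m ?n)"
    hence i: "i < ?n" and j: "j < ?n" by auto
    have "bs ! j = lcf (\<lambda>k. ?Q $$ (k,j)) cs"
      using cb_rep[OF cs _ ] j bs by (auto simp: is_basis_list_def)
    also have "\<dots> = lcf (\<lambda>i. \<Sum>k<length cs. ?P $$ (i,k) * ?Q $$ (k,j)) bs"
      by (rule lcf_subst) (use cb_rep[OF bs] cs in \<open>auto simp: is_basis_list_def\<close>)
    finally have e1: "bs ! j = lcf (\<lambda>i. \<Sum>k<?n. ?P $$ (i,k) * ?Q $$ (k,j)) bs" using len by simp
    have e2: "bs ! j = lcf (\<lambda>i. if i = j then 1 else 0) bs" by (rule lcf_delta[OF j, symmetric])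
    have "lcf (\<lambda>i. \<Sum>k<?n. ?P $$ (i,k) * ?Q $$ (k,j)) bs = lcf (\<lambda>i. if i = j then 1 else 0) bs"
      using e1 e2 by simp
    from lcf_unique[OF bs this i]
    have "(\<Sum>k<?n. ?P $$ (i,k) * ?Q $$ (k,j)) = (if i = j then 1 else 0)" by simp
    thus "(?P * ?Q) $$ (i,j) = 1\<^sub>m ?n $$ (i,j)"
      using mult_entry[OF P Q i j] i j by simp
  qed (use P Q in auto)
qed

lemma matrix_wrt_rep:
  assumes bs: "is_basis_list V bs" and inv: "\<forall>v\<in>V. T v \<in> V" and j: "j < length bs"
  shows "T (bs ! j) = lcf (\<lambda>i. matrix_wrt bs T $$ (i,j)) bs"
proof -
  have "bs ! j \<in> V" using bs j by (auto simp: is_basis_list_def)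
  hence "T (bs ! j) \<in> V" using inv by blast
  from lcf_rep[OF bs this] have "T (bs ! j) = lcf (\<lambda>i. coords bs (T (bs ! j)) ! i) bs" .
  also have "\<dots> = lcf (\<lambda>i. matrix_wrt bs T $$ (i,j)) bs"
    by (rule lcf_cong) (use j in \<open>simp add: matrix_wrt_def\<close>)
  finally show ?thesis .
qed

lemma charpoly_indep:
  assumes bs: "is_basis_list V bs" and cs: "is_basis_list V cs" and lin: "lin T"
    and inv: "\<forall>v\<in>V. T v \<in> V"
  shows "char_poly (matrix_wrt bs T) = char_poly (matrix_wrt cs T)"
proof -
  let ?n = "length bs"
  have len: "length cs = ?n" using basis_len[OF cs bs] .
  let ?P = "cb bs cs" and ?Q = "cb cs bs"
  let ?Mb = "matrix_wrt bs T" and ?Mc = "matrix_wrt cs T"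
  have P: "?P \<in> carrier_mat ?n ?n" and Q: "?Q \<in> carrier_mat ?n ?n"
    using len by (auto simp: cb_def)
  have Mb: "?Mb \<in> carrier_mat ?n ?n" and Mc: "?Mc \<in> carrier_mat ?n ?n"
    using len by (auto simp: matrix_wrt_def)
  have PQ: "?P * ?Q = 1\<^sub>m ?n" by (rule cb_mult[OF bs cs])
  have QP: "?Q * ?P = 1\<^sub>m ?n" using cb_mult[OF cs bs] len by simp
  have inter: "?Mb * ?P = ?P * ?Mc"
  proof (rule eq_matI)
    fix i j assume "i < dim_row (?P * ?Mc)" "j < dim_col (?P * ?Mc)"
    hence i: "i < ?n" and j: "j < ?n" using P Mc by auto
    have csj: "cs ! j = lcf (\<lambda>k. ?P $$ (k,j)) bs"
      using cb_rep[OF bs _ ] j cs len by (auto simp: is_basis_list_def)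
    have "T (cs ! j) = lcf (\<lambda>k. ?P $$ (k,j)) (map T bs)"
      using csj lin_lcf[OF lin] by simp
    also have "\<dots> = lcf (\<lambda>i. \<Sum>k<?n. ?Mb $$ (i,k) * ?P $$ (k,j)) bs"
      by (subst lcf_subst[of _ "\<lambda>i k. ?Mb $$ (i,k)" bs]) (use matrix_wrt_rep[OF bs inv] in auto)
    finally have e1: "T (cs ! j) = lcf (\<lambda>i. \<Sum>k<?n. ?Mb $$ (i,k) * ?P $$ (k,j)) bs" .
    have "T (cs ! j) = lcf (\<lambda>k. ?Mc $$ (k,j)) cs"
      using matrix_wrt_rep[OF cs inv] j len by simp
    also have "\<dots> = lcf (\<lambda>i. \<Sum>k<length cs. ?P $$ (i,k) * ?Mc $$ (k,j)) bs"
      by (rule lcf_subst) (use cb_rep[OF bs] cs in \<open>auto simp: is_basis_list_def\<close>)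
    finally have e2: "T (cs ! j) = lcf (\<lambda>i. \<Sum>k<?n. ?P $$ (i,k) * ?Mc $$ (k,j)) bs"
      using len by simp
    have "(\<Sum>k<?n. ?Mb $$ (i,k) * ?P $$ (k,j)) = (\<Sum>k<?n. ?P $$ (i,k) * ?Mc $$ (k,j))"
    proof -
      have "lcf (\<lambda>i. \<Sum>k<?n. ?Mb $$ (i,k) * ?P $$ (k,j)) bs = lcf (\<lambda>i. \<Sum>k<?n. ?P $$ (i,k) * ?Mc $$ (k,j)) bs"
        using e1 e2 by simp
      from lcf_unique[OF bs this i] show ?thesis by simp
    qed
    thus "(?Mb * ?P) $$ (i,j) = (?P * ?Mc) $$ (i,j)"
      using mult_entry[OF Mb P i j] mult_entry[OF P Mc i j] by simp
  qed (use P Mb Mc in auto)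
  have "?Mb = ?Mb * (?P * ?Q)" using PQ Mb by simp
  also have "\<dots> = (?Mb * ?P) * ?Q" using Mb P Q by simp
  also have "\<dots> = ?P * ?Mc * ?Q" using inter by simp
  finally have eq: "?Mb = ?P * ?Mc * ?Q" .
  have car: "{?Mb, ?Mc, ?P, ?Q} \<subseteq> carrier_mat ?n ?n" using P Q Mb Mc by auto
  have "similar_mat ?Mb ?Mc" by (rule similar_matI[OF car PQ QP eq])
  thus ?thesis by (rule char_poly_similar)
qed

lemma char_poly_block:
  fixes A1 :: "'a::field mat"
  assumes A1: "A1 \<in> carrier_mat n n" and A2: "A2 \<in> carrier_mat n m" and A4: "A4 \<in> carrier_mat m m"
  shows "char_poly (four_block_mat A1 A2 (0\<^sub>m m n) A4) = char_poly A1 * char_poly A4"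
proof -
  let ?cm = "\<lambda> A. [:0, 1:] \<cdot>\<^sub>m 1\<^sub>m (dim_row A) + map_mat (\<lambda>a. [:- a:]) A"
  let ?B2 = "map_mat (\<lambda>a. [:- a:]) A2"
  let ?A = "four_block_mat A1 A2 (0\<^sub>m m n) A4"
  have "char_poly ?A = det (?cm ?A)"
    unfolding char_poly_defs using A1 A4 by simp
  also have "?cm ?A = four_block_mat (?cm A1) ?B2 (0\<^sub>m m n) (?cm A4)"
    by (rule eq_matI, insert A1 A2 A4, auto simp: one_poly_def)
  also have "det \<dots> = det (?cm A1) * det (?cm A4)"
    by (rule det_four_block_mat_lower_left_zero[OF _ _ refl], insert A1 A2 A4, auto)
  also have "\<dots> = char_poly A1 * char_poly A4" unfolding char_poly_defs ..
  finally show ?thesis .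
qed

lemma lcf_append0:
  "lcf c bw = lcf (\<lambda>i. if i < length bw then c i else 0) (bw @ ds)"
proof -
  have "lcf (\<lambda>i. if i < length bw then c i else 0) (bw @ ds)
      = (\<Sum>i<length bw + length ds. scal (if i < length bw then c i else 0) ((bw @ ds) ! i))"
    by (simp add: lcf_def)
  also have "\<dots> = (\<Sum>i<length bw. scal (if i < length bw then c i else 0) ((bw @ ds) ! i))"
    by (rule sum.mono_neutral_right) (auto simp: scal_def fun_eq_iff)
  also have "\<dots> = lcf c bw" unfolding lcf_def by (rule sum.cong) (auto simp: nth_append)
  finally show ?thesis by simp
qed

lemma sub_dvd:
  assumes WV: "W \<subseteq> V" and bw: "is_basis_list W bw" and bv: "is_basis_list V bv"
    and lin: "lin T" and invV: "\<forall>v\<in>V. T v \<in> V" and invW: "\<forall>w\<in>W. T w \<in> W"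
  shows "char_poly (matrix_wrt bw T) dvd char_poly (matrix_wrt bv T)"
proof -
  have ind: "fs.independent (set bw)" and bwV: "set bw \<subseteq> V"
    using bw WV by (auto simp: is_basis_list_def)
  obtain C where C: "set bw \<subseteq> C" "C \<subseteq> V" "fs.independent C" "V \<subseteq> fs.span C"
    using fs.maximal_independent_subset_extend[OF bwV ind] by blast
  have Vsp: "V = fs.span (set bv)" using bv by (simp add: is_basis_list_def)
  have "finite C" using fs.independent_span_bound[of "set bv" C] C Vsp by auto
  then obtain ds where ds: "set ds = C - set bw" "distinct ds"
    using finite_distinct_list[of "C - set bw"] by auto
  define cs where "cs = bw @ ds"
  have setcs: "set cs = C" using ds C by (auto simp: cs_def)
  have dcs: "distinct cs" using ds bw by (auto simp: cs_def is_basis_list_def)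
  have "fs.span C \<subseteq> V" using C Vsp by (metis fs.span_minimal fs.subspace_span)
  hence spC: "fs.span C = V" using C by auto
  have cs: "is_basis_list V cs" using setcs dcs spC C by (simp add: is_basis_list_def)
  let ?n = "length bw" and ?m = "length ds"
  let ?Mw = "matrix_wrt bw T" and ?Mc = "matrix_wrt cs T"
  have lcs: "length cs = ?n + ?m" by (simp add: cs_def)
  have Mw: "?Mw \<in> carrier_mat ?n ?n" by (simp add: matrix_wrt_def)
  have Mc: "?Mc \<in> carrier_mat (?n + ?m) (?n + ?m)" using lcs by (simp add: matrix_wrt_def)
  have col: "?Mc $$ (i,j) = (if i < ?n then ?Mw $$ (i,j) else 0)" if i: "i < ?n + ?m" and j: "j < ?n" for i j
  proof -
    have csj: "cs ! j = bw ! j" using j by (simp add: cs_def nth_append)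
    have "T (cs ! j) = lcf (\<lambda>i. ?Mw $$ (i,j)) bw" using matrix_wrt_rep[OF bw invW j] csj by simp
    also have "\<dots> = lcf (\<lambda>i. if i < ?n then ?Mw $$ (i,j) else 0) cs"
      unfolding cs_def by (rule lcf_append0)
    finally have "coords cs (T (cs ! j)) ! i = (if i < ?n then ?Mw $$ (i,j) else 0)"
      using coords_lcf[OF cs _ ] i lcs by simp
    thus ?thesis using i j lcs by (simp add: matrix_wrt_def)
  qed
  define A2 where "A2 = mat ?n ?m (\<lambda>(i,j). ?Mc $$ (i, ?n + j))"
  define A4 where "A4 = mat ?m ?m (\<lambda>(i,j). ?Mc $$ (?n + i, ?n + j))"
  have blk: "?Mc = four_block_mat ?Mw A2 (0\<^sub>m ?m ?n) A4"
  proof (rule eq_matI)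
    fix i j assume i: "i < dim_row (four_block_mat ?Mw A2 (0\<^sub>m ?m ?n) A4)"
      and j: "j < dim_col (four_block_mat ?Mw A2 (0\<^sub>m ?m ?n) A4)"
    hence i': "i < ?n + ?m" and j': "j < ?n + ?m" using Mw by (auto simp: A4_def)
    show "?Mc $$ (i,j) = four_block_mat ?Mw A2 (0\<^sub>m ?m ?n) A4 $$ (i,j)"
      using i' j' col[OF i'] Mw by (auto simp: A2_def A4_def index_mat_four_block)
  qed (use Mc Mw in \<open>auto simp: A4_def\<close>)
  have "char_poly (matrix_wrt bv T) = char_poly ?Mc" by (rule charpoly_indep[OF bv cs lin invV])
  also have "\<dots> = char_poly ?Mw * char_poly A4"
    unfolding blk by (rule char_poly_block[OF Mw]) (auto simp: A2_def A4_def)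
  finally show ?thesis by simp
qed

definition fd :: "('g \<Rightarrow> 'k::field) set \<Rightarrow> bool" where
  "fd V \<longleftrightarrow> fs.subspace V \<and> (\<exists>S. finite S \<and> V \<subseteq> fs.span S)"

lemma fd_basis: assumes "fd V" shows "\<exists>bs. is_basis_list V bs"
proof -
  obtain S where S: "finite S" "V \<subseteq> fs.span S" and sub: "fs.subspace V" using assms by (auto simp: fd_def)
  obtain B where B: "B \<subseteq> V" "fs.independent B" "V \<subseteq> fs.span B" by (rule fs.basis_exists)
  have "finite B" using fs.independent_span_bound[OF S(1) B(2)] B(1) S(2) by auto
  then obtain bs where bs: "set bs = B" "distinct bs" using finite_distinct_list by auto
  have "fs.span B \<subseteq> V" using B(1) sub by (rule fs.span_minimal)
  hence "fs.span B = V" using B by auto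
  thus ?thesis using bs B by (auto simp: is_basis_list_def)
qed

lemma charpoly_on_dvd:
  assumes "fd V" "fs.subspace W" "W \<subseteq> V" "lin T" "\<forall>v\<in>V. T v \<in> V" "\<forall>w\<in>W. T w \<in> W"
  shows "charpoly_on W T dvd charpoly_on V T"
proof -
  have fW: "fd W" using assms(1-3) by (auto simp: fd_def)
  have bV: "is_basis_list V (SOME bs. is_basis_list V bs)" using fd_basis[OF assms(1)] by (rule someI_ex)
  have bW: "is_basis_list W (SOME bs. is_basis_list W bs)" using fd_basis[OF fW] by (rule someI_ex)
  show ?thesis unfolding charpoly_on_def by (rule sub_dvd[OF assms(3) bW bV assms(4-6)])
qed

lemma Delta_lin: "lin (Delta a)"
  unfolding lin_def
proof (intro conjI allI)
  fix x y :: "'a \<Rightarrow> 'b"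
  show "Delta a (x + y) = Delta a x + Delta a y"
    by (simp add: fun_eq_iff Delta_def conv_def sum.distrib distrib_right)
next
  fix c :: 'b and x :: "'a \<Rightarrow> 'b"
  show "Delta a (scal c x) = scal c (Delta a x)"
    by (simp add: fun_eq_iff Delta_def conv_def scal_def sum_distrib_left mult.assoc)
qed

lemma periodic_subspace: "fs.subspace (periodic_space L)"
  unfolding fs.subspace_def periodic_space_def by (auto simp: scal_def)

lemma periodic_mono: "L \<subseteq> L' \<Longrightarrow> periodic_space L' \<subseteq> periodic_space L"
  unfolding periodic_space_def by auto

lemma Delta_inv:
  assumes "f \<in> periodic_space L" shows "Delta a f \<in> periodic_space L"
  unfolding periodic_space_def
proof (intro CollectI allI impI)
  fix v w assume w: "w \<in> L"
  have per: "f (k + w) = f k" for k using assms w by (simp add: periodic_space_def)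
  have per': "f (k - w) = f k" for k using per[of "k - w"] by simp
  have "Delta a f (v + w) = (\<Sum>h | a (v + w - h) \<noteq> 0. f h * a (v + w - h))"
    by (simp add: Delta_def conv_def)
  also have "\<dots> = (\<Sum>k | a (v - k) \<noteq> 0. f k * a (v - k))"
    by (rule sum.reindex_bij_witness[of _ "\<lambda>k. k + w" "\<lambda>h. h - w"]) (auto simp: per' algebra_simps)
  also have "\<dots> = Delta a f v" by (simp add: Delta_def conv_def)
  finally show "Delta a f (v + w) = Delta a f v" .
qed

lemma periodic_fd:
  fixes L :: "'g::ab_group_add set"
  assumes "finite_index_sublattice L"
  shows "fd (periodic_space L :: ('g \<Rightarrow> 'k::field) set)"
proof -
  have sg: "0 \<in> L" "\<And>x y. x \<in> L \<Longrightarrow> y \<in> L \<Longrightarrow> x + y \<in> L" "\<And>x. x \<in> L \<Longrightarrow> - x \<in> L"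
    using assms by (auto simp: finite_index_sublattice_def is_subgroup_def)
  define Cs where "Cs = (\<lambda>v. (\<lambda>w. v + w) ` L) ` UNIV"
  have fC: "finite Cs" using assms by (simp add: finite_index_sublattice_def Cs_def)
  define ind :: "'g set \<Rightarrow> 'g \<Rightarrow> 'k" where "ind c = (\<lambda>x. if x \<in> c then 1 else 0)" for c
  define rep where "rep c = (SOME x. x \<in> c)" for c :: "'g set"
  have "periodic_space L \<subseteq> fs.span (ind ` Cs)"
  proof
    fix f :: "'g \<Rightarrow> 'k" assume f: "f \<in> periodic_space L"
    have per: "f (k + w) = f k" if "w \<in> L" for k w using f that by (simp add: periodic_space_def)
    have "f = (\<Sum>c\<in>Cs. scal (f (rep c)) (ind c))"
    proof (rule ext)
      fix x
      let ?Cx = "(\<lambda>w. x + w) ` L"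
      have trm: "f (rep c) * ind c x = (if c = ?Cx then f x else 0)" if c: "c \<in> Cs" for c
      proof -
        obtain v where v: "c = (\<lambda>w. v + w) ` L" using c by (auto simp: Cs_def)
        show ?thesis
        proof (cases "x \<in> c")
          case True
          then obtain l0 where l0: "l0 \<in> L" "x = v + l0" using v by auto
          have "c = ?Cx"
          proof
            show "c \<subseteq> ?Cx"
            proof
              fix y assume "y \<in> c"
              then obtain w where w: "w \<in> L" "y = v + w" using v by auto
              have "w + - l0 \<in> L" using w(1) l0(1) sg(2,3) by blast
              moreover have "y = x + (w + - l0)" using w(2) l0(2) by (simp add: algebra_simps)
              ultimately show "y \<in> ?Cx" by blast
            qed
            show "?Cx \<subseteq> c"
            proof
              fix y assume "y \<in> ?Cx"
              then obtain w where "w \<in> L" "y = x + w" by auto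
              hence "y = v + (l0 + w)" "l0 + w \<in> L" using l0 sg by (auto simp: algebra_simps)
              thus "y \<in> c" using v by blast
            qed
          qed
          moreover have "rep c \<in> c" unfolding rep_def using True by (rule someI)
          ultimately obtain l1 where "l1 \<in> L" "rep c = x + l1" by auto
          hence "f (rep c) = f x" using per by simp
          thus ?thesis using True \<open>c = ?Cx\<close> by (simp add: ind_def)
        next
          case False
          have "x \<in> ?Cx" using sg(1) by (metis add_0_right image_eqI)
          hence "c \<noteq> ?Cx" using False by auto
          thus ?thesis using False by (simp add: ind_def)
        qed
      qed
      have "(\<Sum>c\<in>Cs. scal (f (rep c)) (ind c)) x = (\<Sum>c\<in>Cs. f (rep c) * ind c x)"
        by (simp add: sum_fun_app scal_def)
      also have "\<dots> = (\<Sum>c\<in>Cs. if c = ?Cx then f x else 0)" by (rule sum.cong) (auto simp: trm)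
      also have "\<dots> = f x" using fC by (simp add: Cs_def)
      finally show "f x = (\<Sum>c\<in>Cs. scal (f (rep c)) (ind c)) x" by simp
    qed
    also have "\<dots> \<in> fs.span (ind ` Cs)"
      by (intro fs.span_sum fs.span_scale fs.span_base) auto
    finally show "f \<in> fs.span (ind ` Cs)" .
  qed
  thus ?thesis unfolding fd_def using periodic_subspace fC by blast
qed

lemma CharPoly_mono:
  fixes L L' :: "'g::ab_group_add set" and as :: "('g \<Rightarrow> 'k::field_gcd) list"
  assumes "finite_index_sublattice L" "L \<subseteq> L'"
  shows "CharPoly as L' dvd CharPoly as L"
proof -
  have each: "charpoly_on (periodic_space L') (Delta a) dvd charpoly_on (periodic_space L) (Delta a)" for a
    by (rule charpoly_on_dvd[OF periodic_fd[OF assms(1)] periodic_subspace periodic_mono[OF assms(2)] Delta_lin])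
       (auto intro: Delta_inv)
  show ?thesis unfolding CharPoly_def
    by (rule Gcd_greatest) (metis (no_types, lifting) Gcd_dvd dvd_trans each image_iff image_eqI)
qed

lemma inter_fi:
  fixes L1 L2 :: "'g::ab_group_add set"
  assumes "finite_index_sublattice L1" "finite_index_sublattice L2"
  shows "finite_index_sublattice (L1 \<inter> L2)"
proof -
  let ?C = "\<lambda>L. (\<lambda>v. (\<lambda>w. v + w) ` L) ` (UNIV :: 'g set)"
  have "?C (L1 \<inter> L2) \<subseteq> (\<lambda>(A,B). A \<inter> B) ` (?C L1 \<times> ?C L2)"
  proof
    fix X assume "X \<in> ?C (L1 \<inter> L2)"
    then obtain v where v: "X = (\<lambda>w. v + w) ` (L1 \<inter> L2)" by auto
    have "X = (\<lambda>w. v + w) ` L1 \<inter> (\<lambda>w. v + w) ` L2" unfolding v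
      by (rule image_Int) (simp add: inj_on_def)
    thus "X \<in> (\<lambda>(A,B). A \<inter> B) ` (?C L1 \<times> ?C L2)" by blast
  qed
  moreover have "finite ((\<lambda>(A,B). A \<inter> B) ` (?C L1 \<times> ?C L2))"
    using assms by (simp add: finite_index_sublattice_def)
  ultimately have "finite (?C (L1 \<inter> L2))" by (rule finite_subset)
  moreover have "is_subgroup (L1 \<inter> L2)" using assms
    by (auto simp: finite_index_sublattice_def is_subgroup_def)
  ultimately show ?thesis by (simp add: finite_index_sublattice_def)
qed

theorem theorem2p4:
  fixes p :: nat
    and as :: "(('n::finite \<Rightarrow> int) \<Rightarrow> 'k::field_gcd) list"
    and L1 L2 :: "('n \<Rightarrow> int) set"
  assumes "prime p"
    and "is_alg_closure_of_GFp p TYPE('k)"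
    and "\<forall>a \<in> set as. fin_supp a"
    and "finite_index_sublattice L1"
    and "finite_index_sublattice L2"
  shows "CharPoly as (set_plus_grp L1 L2) dvd gcd (CharPoly as L1) (CharPoly as L2)
       \<and> lcm (CharPoly as L1) (CharPoly as L2) dvd CharPoly as (L1 \<inter> L2)
       \<and> (L1 \<subseteq> L2 \<longrightarrow> CharPoly as L2 dvd CharPoly as L1)"
proof (intro conjI impI)
  have z1: "0 \<in> L1" and z2: "0 \<in> L2" using assms(4,5) by (auto simp: finite_index_sublattice_def is_subgroup_def)
  have s1: "L1 \<subseteq> set_plus_grp L1 L2" unfolding set_plus_grp_def
  proof
    fix x assume "x \<in> L1"
    thus "x \<in> {x + y |x y. x \<in> L1 \<and> y \<in> L2}" using z2
      by (intro CollectI exI[of _ x] exI[of _ 0]) simp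
  qed
  have s2: "L2 \<subseteq> set_plus_grp L1 L2" unfolding set_plus_grp_def
  proof
    fix x assume "x \<in> L2"
    thus "x \<in> {x + y |x y. x \<in> L1 \<and> y \<in> L2}" using z1
      by (intro CollectI exI[of _ 0] exI[of _ x]) simp
  qed
  show "CharPoly as (set_plus_grp L1 L2) dvd gcd (CharPoly as L1) (CharPoly as L2)"
    using CharPoly_mono[OF assms(4) s1] CharPoly_mono[OF assms(5) s2] by (rule gcd_greatest)
  have fi: "finite_index_sublattice (L1 \<inter> L2)" by (rule inter_fi[OF assms(4,5)])
  show "lcm (CharPoly as L1) (CharPoly as L2) dvd CharPoly as (L1 \<inter> L2)"
    using CharPoly_mono[OF fi, of L1] CharPoly_mono[OF fi, of L2] by (intro lcm_least) auto
  show "CharPoly as L2 dvd CharPoly as L1" if "L1 \<subseteq> L2" using CharPoly_mono[OF assms(4) that] .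
qed

end
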